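(* Let $\alpha: I\to M$ be a unit-speed curve on an oriented surface $M\subset E^3$ with Darboux frame $\{T,V,U\}$ and curvatures $k_g,k_n,\tau_g$. Consider the curve $\gamma$ defined in either of the following two cases: (a) $k_n\equiv0$, $c_4,c_5$ real constants, and $\gamma(s)=\alpha(s)+(c_4-s)T(s)+c_5U(s)$; (b) $k_n$ nowhere zero, $\theta$ an antiderivative of $k_n$, $S$ and $C$ antiderivatives of $\sin\theta$ and $\cos\theta$ respectively, $c_6,c_7$ real constants, $$y_3=c_6\cos\theta+c_7\sin\theta-S\cos\theta+C\sin\theta,\qquad y_1=-\sin\theta\,(S-c_6)-\cos\theta\,(C+c_7),$$ and $\gamma(s)=\alpha(s)+y_1(s)T(s)+y_3(s)U(s)$. In either case assume $\gamma$ is regular. Then $\gamma$ is a general helix if and only if $\alpha$ is a relatively normal-slant helix on $M$.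
   Context: $M$ is an oriented surface in Euclidean 3-space $E^3$ and $\alpha:I\to M$ is a unit-speed curve with arc-length parameter $s$. Its Darboux frame $\{T,V,U\}$ consists of the unit tangent $T=\alpha'$, the unit surface normal $U$ of $M$ along $\alpha$, and $V=U\times T$; it satisfies $T'=k_gV+k_nU$, $V'=-k_gT+\tau_gU$, $U'=-k_nT-\tau_gV$, where $k_g,k_n,\tau_g$ are the geodesic curvature, normal curvature and geodesic torsion. A regular curve is a general helix if its unit tangent makes a constant angle with a fixed direction. $\alpha$ is a relatively normal-slant helix if $\langle V,d\rangle$ is constant for some fixed unit vector $d$. *)

theory Defs
  imports "HOL-Analysis.Analysis"
begin

text \<open>Darboux frame of a unit-speed curve alpha on an oriented surface, over an
open interval I: T = alpha', U = unit surface normal along alpha, V = U x T,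
together with the Darboux structure equations with geodesic curvature kg,
normal curvature kn and geodesic torsion tg (assumed continuous).\<close>

definition darboux_frame ::
  "real set \<Rightarrow> (real \<Rightarrow> real^3) \<Rightarrow> (real \<Rightarrow> real^3) \<Rightarrow> (real \<Rightarrow> real^3) \<Rightarrow> (real \<Rightarrow> real^3)
   \<Rightarrow> (real \<Rightarrow> real) \<Rightarrow> (real \<Rightarrow> real) \<Rightarrow> (real \<Rightarrow> real) \<Rightarrow> bool" where
  "darboux_frame I \<alpha> T V U kg kn tg \<longleftrightarrow>
     continuous_on I kg \<and> continuous_on I kn \<and> continuous_on I tg \<and>
     (\<forall>s\<in>I.
        (\<alpha> has_vector_derivative T s) (at s) \<and>
        norm (T s) = 1 \<and> norm (U s) = 1 \<and> T s \<bullet> U s = 0 \<and>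
        V s = cross3 (U s) (T s) \<and>
        (T has_vector_derivative (kg s *\<^sub>R V s + kn s *\<^sub>R U s)) (at s) \<and>
        (V has_vector_derivative (- kg s *\<^sub>R T s + tg s *\<^sub>R U s)) (at s) \<and>
        (U has_vector_derivative (- kn s *\<^sub>R T s - tg s *\<^sub>R V s)) (at s))"

definition regular_curve :: "real set \<Rightarrow> (real \<Rightarrow> real^3) \<Rightarrow> bool" where
  "regular_curve I \<gamma> \<longleftrightarrow>
     (\<forall>s\<in>I. \<gamma> differentiable (at s) \<and> vector_derivative \<gamma> (at s) \<noteq> 0)"

definition general_helix :: "real set \<Rightarrow> (real \<Rightarrow> real^3) \<Rightarrow> bool" where
  "general_helix I \<gamma> \<longleftrightarrow> regular_curve I \<gamma> \<and>
     (\<exists>d c. norm d = 1 \<and>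
        (\<forall>s\<in>I. (vector_derivative \<gamma> (at s) /\<^sub>R norm (vector_derivative \<gamma> (at s))) \<bullet> d = c))"

definition rel_normal_slant_helix :: "real set \<Rightarrow> (real \<Rightarrow> real^3) \<Rightarrow> bool" where
  "rel_normal_slant_helix I V \<longleftrightarrow>
     (\<exists>d c. norm d = 1 \<and> (\<forall>s\<in>I. V s \<bullet> d = c))"

end

theory Submission
  imports Defs
begin

lemma sign_const:
  fixes f :: "real \<Rightarrow> real"
  assumes "connected I" "continuous_on I f" "\<forall>x\<in>I. f x \<noteq> 0"
  shows "(\<forall>x\<in>I. f x > 0) \<or> (\<forall>x\<in>I. f x < 0)"
proof (rule ccontr)
  assume "\<not> ?thesis"
  then obtain a b where ab: "a \<in> I" "b \<in> I" "f a < 0" "f b > 0"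
    using assms(3) by (meson linorder_neqE_linordered_idom)
  have c: "connected (f ` I)" using connected_continuous_image assms by blast
  have "0 \<in> f ` I"
  proof (cases "f a \<le> f b")
    case True
    then show ?thesis using c ab unfolding connected_iff_interval
      by (metis image_eqI less_eq_real_def)
  next
    case False
    then show ?thesis using ab by linarith
  qed
  then show False using assms(3) by auto
qed

lemma main:
  fixes \<gamma> V :: "real \<Rightarrow> real^3" and f :: "real \<Rightarrow> real"
  assumes "is_interval I" "continuous_on I f"
    and der: "\<forall>s\<in>I. (\<gamma> has_vector_derivative f s *\<^sub>R V s) (at s)"
    and nV: "\<forall>s\<in>I. norm (V s) = 1"
    and reg: "regular_curve I \<gamma>"
  shows "general_helix I \<gamma> \<longleftrightarrow> rel_normal_slant_helix I V"
proof -
  have vd: "vector_derivative \<gamma> (at s) = f s *\<^sub>R V s" if "s \<in> I" for s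
    using der that vector_derivative_at by blast
  have nz: "\<forall>s\<in>I. f s \<noteq> 0"
    using reg vd unfolding regular_curve_def by auto
  obtain e :: real where e: "e = 1 \<or> e = -1"
    and ut: "\<forall>s\<in>I. vector_derivative \<gamma> (at s) /\<^sub>R norm (vector_derivative \<gamma> (at s)) = e *\<^sub>R V s"
  proof -
    from sign_const[OF is_interval_connected[OF assms(1)] assms(2) nz]
    show ?thesis
    proof
      assume p: "\<forall>x\<in>I. f x > 0"
      show ?thesis
        by (rule that[of 1]) (use p nV vd in auto)
    next
      assume p: "\<forall>x\<in>I. f x < 0"
      show ?thesis
        by (rule that[of "-1"]) (use p nV vd in auto)
    qed
  qed
  have "general_helix I \<gamma> \<longleftrightarrow> (\<exists>d c. norm d = 1 \<and> (\<forall>s\<in>I. (e *\<^sub>R V s) \<bullet> d = c))"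
    unfolding general_helix_def using reg ut by auto
  also have "\<dots> \<longleftrightarrow> rel_normal_slant_helix I V"
    unfolding rel_normal_slant_helix_def
  proof
    assume "\<exists>d c. norm d = 1 \<and> (\<forall>s\<in>I. (e *\<^sub>R V s) \<bullet> d = c)"
    then obtain d c where "norm d = 1" "\<forall>s\<in>I. (e *\<^sub>R V s) \<bullet> d = c" by blast
    then show "\<exists>d c. norm d = 1 \<and> (\<forall>s\<in>I. V s \<bullet> d = c)"
      using e by (intro exI[of _ d] exI[of _ "e * c"]) auto
  next
    assume "\<exists>d c. norm d = 1 \<and> (\<forall>s\<in>I. V s \<bullet> d = c)"
    then obtain d c where "norm d = 1" "\<forall>s\<in>I. V s \<bullet> d = c" by blast
    then show "\<exists>d c. norm d = 1 \<and> (\<forall>s\<in>I. (e *\<^sub>R V s) \<bullet> d = c)"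
      using e by (intro exI[of _ d] exI[of _ "e * c"]) auto
  qed
  finally show ?thesis .
qed

theorem theorem3p17:
  fixes I :: "real set"
    and \<alpha> T V U \<gamma> :: "real \<Rightarrow> real^3"
    and kg kn tg \<theta> S C :: "real \<Rightarrow> real"
    and c4 c5 c6 c7 :: real
  assumes I: "is_interval I" "open I"
    and frame: "darboux_frame I \<alpha> T V U kg kn tg"
    and cases:
      "((\<forall>s\<in>I. kn s = 0) \<and>
        (\<forall>s\<in>I. \<gamma> s = \<alpha> s + (c4 - s) *\<^sub>R T s + c5 *\<^sub>R U s))
       \<or>
       ((\<forall>s\<in>I. kn s \<noteq> 0) \<and>
        (\<forall>s\<in>I. (\<theta> has_real_derivative kn s) (at s)) \<and>
        (\<forall>s\<in>I. (S has_real_derivative sin (\<theta> s)) (at s)) \<and>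
        (\<forall>s\<in>I. (C has_real_derivative cos (\<theta> s)) (at s)) \<and>
        (\<forall>s\<in>I. \<gamma> s = \<alpha> s
            + (- sin (\<theta> s) * (S s - c6) - cos (\<theta> s) * (C s + c7)) *\<^sub>R T s
            + (c6 * cos (\<theta> s) + c7 * sin (\<theta> s) - S s * cos (\<theta> s) + C s * sin (\<theta> s)) *\<^sub>R U s))"
    and reg: "regular_curve I \<gamma>"
  shows "general_helix I \<gamma> \<longleftrightarrow> rel_normal_slant_helix I V"
proof -
  note F = frame[unfolded darboux_frame_def]
  have nV: "\<forall>s\<in>I. norm (V s) = 1"
  proof
    fix s assume s: "s \<in> I"
    have "(norm (cross3 (U s) (T s)))\<^sup>2 = (norm (U s))\<^sup>2 * (norm (T s))\<^sup>2 - (U s \<bullet> T s)\<^sup>2"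
      by (rule norm_cross)
    then have "(norm (V s))\<^sup>2 = 1" using F s by (simp add: inner_commute)
    then show "norm (V s) = 1" using norm_ge_zero[of "V s"] by (simp add: power2_eq_1_iff)
  qed
  from cases show ?thesis
  proof
    assume a: "(\<forall>s\<in>I. kn s = 0) \<and> (\<forall>s\<in>I. \<gamma> s = \<alpha> s + (c4 - s) *\<^sub>R T s + c5 *\<^sub>R U s)"
    let ?f = "\<lambda>s. (c4 - s) * kg s - c5 * tg s"
    show ?thesis
    proof (rule main[OF I(1) _ _ nV reg, of ?f])
      show "continuous_on I ?f" using F by (intro continuous_intros) auto
      show "\<forall>s\<in>I. (\<gamma> has_vector_derivative ?f s *\<^sub>R V s) (at s)"
      proof
        fix s assume s: "s \<in> I"
        have d: "((\<lambda>s. \<alpha> s + (c4 - s) *\<^sub>R T s + c5 *\<^sub>R U s) has_vector_derivative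
             (T s + ((c4 - s) *\<^sub>R (kg s *\<^sub>R V s + kn s *\<^sub>R U s) + (-1) *\<^sub>R T s)
              + (c5 *\<^sub>R (- kn s *\<^sub>R T s - tg s *\<^sub>R V s) + 0 *\<^sub>R U s))) (at s)"
          using F s by (intro derivative_eq_intros) auto
        have e: "T s + ((c4 - s) *\<^sub>R (kg s *\<^sub>R V s + kn s *\<^sub>R U s) + (-1) *\<^sub>R T s)
              + (c5 *\<^sub>R (- kn s *\<^sub>R T s - tg s *\<^sub>R V s) + 0 *\<^sub>R U s) = ?f s *\<^sub>R V s"
          using a s by (simp add: algebra_simps)
        show "(\<gamma> has_vector_derivative ?f s *\<^sub>R V s) (at s)"
          using d[unfolded e] I(2) s a
          by (rule_tac has_vector_derivative_transform_within_open[where S=I]) auto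
      qed
    qed
  next
    assume b: "(\<forall>s\<in>I. kn s \<noteq> 0) \<and>
        (\<forall>s\<in>I. (\<theta> has_real_derivative kn s) (at s)) \<and>
        (\<forall>s\<in>I. (S has_real_derivative sin (\<theta> s)) (at s)) \<and>
        (\<forall>s\<in>I. (C has_real_derivative cos (\<theta> s)) (at s)) \<and>
        (\<forall>s\<in>I. \<gamma> s = \<alpha> s
            + (- sin (\<theta> s) * (S s - c6) - cos (\<theta> s) * (C s + c7)) *\<^sub>R T s
            + (c6 * cos (\<theta> s) + c7 * sin (\<theta> s) - S s * cos (\<theta> s) + C s * sin (\<theta> s)) *\<^sub>R U s)"
    define y1 where "y1 = (\<lambda>s. - sin (\<theta> s) * (S s - c6) - cos (\<theta> s) * (C s + c7))"
    define y3 where "y3 = (\<lambda>s. c6 * cos (\<theta> s) + c7 * sin (\<theta> s) - S s * cos (\<theta> s) + C s * sin (\<theta> s))"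
    let ?f = "\<lambda>s. y1 s * kg s - y3 s * tg s"
    have ct: "continuous_on I \<theta>" "continuous_on I S" "continuous_on I C"
      using b by (auto intro!: continuous_at_imp_continuous_on DERIV_isCont)
    show ?thesis
    proof (rule main[OF I(1) _ _ nV reg, of ?f])
      show "continuous_on I ?f" using F ct unfolding y1_def y3_def
        by (intro continuous_intros) auto
      show "\<forall>s\<in>I. (\<gamma> has_vector_derivative ?f s *\<^sub>R V s) (at s)"
      proof
        fix s assume s: "s \<in> I"
        have dy1: "(y1 has_real_derivative
            (- (cos (\<theta> s) * kn s) * (S s - c6) + - sin (\<theta> s) * sin (\<theta> s)
             - ((- (sin (\<theta> s) * kn s)) * (C s + c7) + cos (\<theta> s) * cos (\<theta> s)))) (at s)"
          unfolding y1_def using b s by (auto intro!: derivative_eq_intros)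
        have dy3: "(y3 has_real_derivative
            (c6 * (- (sin (\<theta> s) * kn s)) + c7 * (cos (\<theta> s) * kn s)
             - (sin (\<theta> s) * cos (\<theta> s) + S s * (- (sin (\<theta> s) * kn s)))
             + (cos (\<theta> s) * sin (\<theta> s) + C s * (cos (\<theta> s) * kn s)))) (at s)"
          unfolding y3_def using b s by (auto intro!: derivative_eq_intros)
        define A where "A = (- (cos (\<theta> s) * kn s) * (S s - c6) + - sin (\<theta> s) * sin (\<theta> s)
             - ((- (sin (\<theta> s) * kn s)) * (C s + c7) + cos (\<theta> s) * cos (\<theta> s)))"
        define B where "B = (c6 * (- (sin (\<theta> s) * kn s)) + c7 * (cos (\<theta> s) * kn s)
             - (sin (\<theta> s) * cos (\<theta> s) + S s * (- (sin (\<theta> s) * kn s)))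
             + (cos (\<theta> s) * sin (\<theta> s) + C s * (cos (\<theta> s) * kn s)))"
        have d: "((\<lambda>s. \<alpha> s + y1 s *\<^sub>R T s + y3 s *\<^sub>R U s) has_vector_derivative
             (T s + (y1 s *\<^sub>R (kg s *\<^sub>R V s + kn s *\<^sub>R U s) + A *\<^sub>R T s)
              + (y3 s *\<^sub>R (- kn s *\<^sub>R T s - tg s *\<^sub>R V s) + B *\<^sub>R U s))) (at s)"
          using F s dy1 dy3 unfolding A_def B_def by (intro derivative_eq_intros) auto
        have sc: "sin (\<theta> s) * sin (\<theta> s) + cos (\<theta> s) * cos (\<theta> s) = 1"
          using sin_cos_squared_add[of "\<theta> s"] by (simp add: power2_eq_square)
        have A0: "1 + A - y3 s * kn s = 0"
          unfolding A_def y3_def using sc by (simp add: algebra_simps)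
        have B0: "y1 s * kn s + B = 0"
          unfolding B_def y1_def by (simp add: algebra_simps)
        have "T s + (y1 s *\<^sub>R (kg s *\<^sub>R V s + kn s *\<^sub>R U s) + A *\<^sub>R T s)
              + (y3 s *\<^sub>R (- kn s *\<^sub>R T s - tg s *\<^sub>R V s) + B *\<^sub>R U s)
             = (1 + A - y3 s * kn s) *\<^sub>R T s + ?f s *\<^sub>R V s + (y1 s * kn s + B) *\<^sub>R U s"
          by (simp add: algebra_simps)
        also have "\<dots> = ?f s *\<^sub>R V s" using A0 B0 by simp
        finally have e: "T s + (y1 s *\<^sub>R (kg s *\<^sub>R V s + kn s *\<^sub>R U s) + A *\<^sub>R T s)
              + (y3 s *\<^sub>R (- kn s *\<^sub>R T s - tg s *\<^sub>R V s) + B *\<^sub>R U s) = ?f s *\<^sub>R V s" .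
        show "(\<gamma> has_vector_derivative ?f s *\<^sub>R V s) (at s)"
          using d[unfolded e] I(2) s b unfolding y1_def y3_def
          by (rule_tac has_vector_derivative_transform_within_open[where S=I]) auto
      qed
    qed
  qed
qed

end
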